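(* Let $M\in\mathbb{C}^{k,p}$ and let $\mathcal{S}$ and $\mathbb{P}$ be as in the context (for fixed block sizes $p_i,k_i$). Then $$\mu_{\mathcal{S}}(M)=\sup_{P\in\mathbb{P}}\rho(PM).$$
   Context: Fix positive integers $k_1,\ldots,k_n$ and $p_1,\ldots,p_n$ with $\sum k_i=k$, $\sum p_i=p$. Let $\mathcal{S}:=\{\operatorname{diag}(\Delta_1,\ldots,\Delta_n):\Delta_i\in\mathbb{C}^{p_i,k_i}\}\subseteq\mathbb{C}^{p,k}$ (block-diagonal with rectangular diagonal blocks). For $M\in\mathbb{C}^{k,p}$, the structured $\mu$-value is $\mu_{\mathcal{S}}(M):=\big(\inf\{\|\Delta\|:\Delta\in\mathcal{S},\ \det(I_p-\Delta M)=0\}\big)^{-1}$ ($\|\cdot\|$ the spectral norm), with $\mu_{\mathcal S}(M)=0$ if no such $\Delta$ exists. A matrix $P\in\mathbb{C}^{m,l}$ is partially isometric if $\|Px\|=\|x\|$ for every $x$ orthogonal to the null space of $P$. $\mathbb{P}:=\{\operatorname{diag}(P_1,\ldots,P_n): P_i\in\mathbb{C}^{p_i,k_i}\text{ partially isometric}\}$. $\rho(\cdot)$ denotes the spectral radius. *)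

theory Defs
  imports "Jordan_Normal_Form.Spectral_Radius"
begin

definition vnorm :: "complex vec \<Rightarrow> real" where
  "vnorm v = sqrt (\<Sum>i<dim_vec v. (cmod (v $ i))\<^sup>2)"

definition cinner :: "complex vec \<Rightarrow> complex vec \<Rightarrow> complex" where
  "cinner x y = (\<Sum>i<dim_vec x. x $ i * cnj (y $ i))"

definition spec_norm :: "complex mat \<Rightarrow> real" where
  "spec_norm A = Sup {vnorm (A *\<^sub>v x) | x. x \<in> carrier_vec (dim_col A) \<and> vnorm x \<le> 1}"

definition struct_set :: "nat list \<Rightarrow> nat list \<Rightarrow> complex mat set" where
  "struct_set ps ks = {diag_block_mat Ds | Ds. length Ds = length ps \<and>
      (\<forall>i<length ps. Ds ! i \<in> carrier_mat (ps ! i) (ks ! i))}"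

definition partial_isometry :: "complex mat \<Rightarrow> bool" where
  "partial_isometry P \<longleftrightarrow> (\<forall>x \<in> carrier_vec (dim_col P).
      (\<forall>y \<in> carrier_vec (dim_col P). P *\<^sub>v y = 0\<^sub>v (dim_row P) \<longrightarrow> cinner x y = 0)
      \<longrightarrow> vnorm (P *\<^sub>v x) = vnorm x)"

definition piso_set :: "nat list \<Rightarrow> nat list \<Rightarrow> complex mat set" where
  "piso_set ps ks = {diag_block_mat Ps | Ps. length Ps = length ps \<and>
      (\<forall>i<length ps. Ps ! i \<in> carrier_mat (ps ! i) (ks ! i) \<and> partial_isometry (Ps ! i))}"

definition mu_S :: "nat list \<Rightarrow> nat list \<Rightarrow> complex mat \<Rightarrow> real" where
  "mu_S ps ks M = (let D = {\<Delta> \<in> struct_set ps ks. det (1\<^sub>m (sum_list ps) - \<Delta> * M) = 0} in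
     if D = {} then 0 else inverse (Inf (spec_norm ` D)))"

end

theory Submission
  imports Defs "HOL-Complex_Analysis.Great_Picard"
begin
hide_type (open) Finite_Cartesian_Product.vec
no_notation Finite_Cartesian_Product.vec_nth (infixl "$" 90)
hide_const (open) Finite_Cartesian_Product.mat Finite_Cartesian_Product.vec Finite_Cartesian_Product.row
  Finite_Cartesian_Product.transpose Determinants.det

lemma vnorm_L2: "vnorm v = L2_set (\<lambda>i. cmod (v $ i)) {..<dim_vec v}"
  unfolding vnorm_def L2_set_def by simp

lemma vnorm_nonneg: "vnorm v \<ge> 0"
  unfolding vnorm_def by (simp add: sum_nonneg)

lemma vnorm_sq: "(vnorm v)\<^sup>2 = (\<Sum>i<dim_vec v. (cmod (v $ i))\<^sup>2)"
  unfolding vnorm_def by (simp add: sum_nonneg)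

lemma cinner_self: "cinner v v = complex_of_real ((vnorm v)\<^sup>2)"
proof -
  have "cinner v v = (\<Sum>i<dim_vec v. complex_of_real ((cmod (v $ i))\<^sup>2))"
    unfolding cinner_def by (intro sum.cong refl) (simp only: complex_norm_square)
  thus ?thesis unfolding vnorm_sq of_real_sum .
qed

lemma vnorm_zero_vec[simp]: "vnorm (0\<^sub>v n) = 0"
  unfolding vnorm_def by simp

lemma vnorm_eq_0: assumes "v \<in> carrier_vec n" shows "vnorm v = 0 \<longleftrightarrow> v = 0\<^sub>v n"
proof
  assume "vnorm v = 0"
  hence "(\<Sum>i<dim_vec v. (cmod (v $ i))\<^sup>2) = 0" using vnorm_sq[of v] by simp
  hence "\<forall>i\<in>{..<dim_vec v}. (cmod (v $ i))\<^sup>2 = 0"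
    by (subst sum_nonneg_eq_0_iff[symmetric]) auto
  thus "v = 0\<^sub>v n" using assms by (intro eq_vecI) auto
qed simp

lemma vnorm_smult: "vnorm (a \<cdot>\<^sub>v v) = cmod a * vnorm v"
proof -
  have "(vnorm (a \<cdot>\<^sub>v v))\<^sup>2 = (cmod a * vnorm v)\<^sup>2"
    unfolding vnorm_sq power_mult_distrib by (simp add: norm_mult power_mult_distrib sum_distrib_left)
  thus ?thesis using vnorm_nonneg[of v] vnorm_nonneg[of "a \<cdot>\<^sub>v v"]
    by (simp add: power2_eq_iff_nonneg)
qed

lemma cinner_CS: assumes "dim_vec y = dim_vec x"
  shows "cmod (cinner x y) \<le> vnorm x * vnorm y"
proof -
  have "cmod (cinner x y) \<le> (\<Sum>i<dim_vec x. cmod (x $ i) * cmod (y $ i))"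
    unfolding cinner_def by (rule order.trans[OF norm_sum]) (simp add: norm_mult)
  also have "\<dots> = (\<Sum>i<dim_vec x. \<bar>cmod (x $ i)\<bar> * \<bar>cmod (y $ i)\<bar>)" by simp
  also have "\<dots> \<le> vnorm x * vnorm y" unfolding vnorm_L2 assms by (rule L2_set_mult_ineq)
  finally show ?thesis .
qed

lemma cinner_add_left: assumes "dim_vec x = dim_vec y"
  shows "cinner (x + y) z = cinner x z + cinner y z"
  unfolding cinner_def using assms by (simp add: distrib_right sum.distrib)

lemma cinner_minus_left: assumes "dim_vec x = dim_vec y"
  shows "cinner (x - y) z = cinner x z - cinner y z"
  unfolding cinner_def using assms by (simp add: left_diff_distrib sum_subtractf)

lemma cinner_smult_left: "cinner (c \<cdot>\<^sub>v x) z = c * cinner x z"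
  unfolding cinner_def by (simp add: sum_distrib_left ac_simps)

lemma cinner_smult_right: assumes "dim_vec z = dim_vec x"
  shows "cinner x (c \<cdot>\<^sub>v z) = cnj c * cinner x z"
  unfolding cinner_def using assms by (simp add: sum_distrib_left ac_simps)

lemma cinner_sym: assumes "dim_vec y = dim_vec x"
  shows "cinner x y = cnj (cinner y x)"
  unfolding cinner_def using assms by (simp add: ac_simps)

lemma cinner_zero_right: assumes "dim_vec x = n" shows "cinner x (0\<^sub>v n) = 0"
  unfolding cinner_def using assms by simp

definition adj :: "complex mat \<Rightarrow> complex mat" where
  "adj A = mat (dim_col A) (dim_row A) (\<lambda>(i,j). cnj (A $$ (j,i)))"

lemma adj_carrier: "A \<in> carrier_mat m n \<Longrightarrow> adj A \<in> carrier_mat n m"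
  unfolding adj_def by auto

lemma cinner_adj: assumes A: "A \<in> carrier_mat m n" and x: "x \<in> carrier_vec n" and y: "y \<in> carrier_vec m"
  shows "cinner (A *\<^sub>v x) y = cinner x (adj A *\<^sub>v y)"
proof -
  have "cinner (A *\<^sub>v x) y = (\<Sum>i<m. (\<Sum>j<n. A $$ (i,j) * x $ j) * cnj (y $ i))"
    unfolding cinner_def using A x y by (simp add: mult_mat_vec_def scalar_prod_def atLeast0LessThan row_def)
  also have "\<dots> = (\<Sum>i<m. \<Sum>j<n. A $$ (i,j) * x $ j * cnj (y $ i))"
    by (simp add: sum_distrib_right)
  also have "\<dots> = (\<Sum>j<n. \<Sum>i<m. A $$ (i,j) * x $ j * cnj (y $ i))"
    by (rule sum.swap)
  also have "\<dots> = (\<Sum>j<n. x $ j * cnj (\<Sum>i<m. cnj (A $$ (i,j)) * y $ i))"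
    by (simp add: sum_distrib_left ac_simps)
  also have "\<dots> = cinner x (adj A *\<^sub>v y)"
    unfolding cinner_def using A x y
    by (simp add: adj_def mult_mat_vec_def scalar_prod_def atLeast0LessThan row_def)
  finally show ?thesis .
qed



lemma sum_split_add: "(\<Sum>i<n+(m::nat). f i) = (\<Sum>i<n. f i) + (\<Sum>i<m. f (n+i))"
  by (induct m) (auto simp: ac_simps)

lemma vnorm_append: "(vnorm (a @\<^sub>v b))\<^sup>2 = (vnorm a)\<^sup>2 + (vnorm b)\<^sup>2"
  unfolding vnorm_sq by (simp add: sum_split_add)

lemma mult_mat_vec_zero_right: "A \<in> carrier_mat m n \<Longrightarrow> A *\<^sub>v 0\<^sub>v n = 0\<^sub>v m"
  by (intro eq_vecI) (auto simp: scalar_prod_def)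

lemma zero_mult_mat_vec: "v \<in> carrier_vec n \<Longrightarrow> 0\<^sub>m m n *\<^sub>v v = 0\<^sub>v m"
  by (intro eq_vecI) (auto simp: scalar_prod_def)

lemma smult_mat_mult_vec: "A \<in> carrier_mat m n \<Longrightarrow> v \<in> carrier_vec n \<Longrightarrow> (c \<cdot>\<^sub>m A) *\<^sub>v v = c \<cdot>\<^sub>v (A *\<^sub>v v)"
  by (intro eq_vecI) (auto simp: scalar_prod_def sum_distrib_left ac_simps)

lemma sq_le_mult_imp_le: assumes "(a::real)\<^sup>2 \<le> a * b" "0 \<le> a" "0 \<le> b" shows "a \<le> b"
proof (cases "a = 0")
  case False thus ?thesis using assms by (simp add: power2_eq_square)
qed (use assms in auto)

lemma mat_vec_index: "A \<in> carrier_mat m n \<Longrightarrow> x \<in> carrier_vec n \<Longrightarrow> i < m \<Longrightarrow>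
  (A *\<^sub>v x) $ i = (\<Sum>j<n. A $$ (i,j) * x $ j)"
  by (simp add: scalar_prod_def atLeast0LessThan)

definition frob :: "complex mat \<Rightarrow> real" where
  "frob A = sqrt (\<Sum>i<dim_row A. \<Sum>j<dim_col A. (cmod (A $$ (i,j)))\<^sup>2)"

lemma frob_nonneg: "frob A \<ge> 0" unfolding frob_def by (simp add: sum_nonneg)

lemma frob_bound: assumes A: "A \<in> carrier_mat m n" and x: "x \<in> carrier_vec n"
  shows "vnorm (A *\<^sub>v x) \<le> frob A * vnorm x"
proof -
  have row: "(cmod ((A *\<^sub>v x) $ i))\<^sup>2 \<le> (\<Sum>j<n. (cmod (A $$ (i,j)))\<^sup>2) * (vnorm x)\<^sup>2" if i: "i < m" for i
  proof -
    have "cmod ((A *\<^sub>v x) $ i) \<le> (\<Sum>j<n. cmod (A $$ (i,j)) * cmod (x $ j))"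
      unfolding mat_vec_index[OF A x i] by (rule order.trans[OF norm_sum]) (simp add: norm_mult)
    also have "\<dots> = (\<Sum>j<n. \<bar>cmod (A $$ (i,j))\<bar> * \<bar>cmod (x $ j)\<bar>)" by simp
    also have "\<dots> \<le> L2_set (\<lambda>j. cmod (A $$ (i,j))) {..<n} * L2_set (\<lambda>j. cmod (x $ j)) {..<n}"
      by (rule L2_set_mult_ineq)
    also have "\<dots> = L2_set (\<lambda>j. cmod (A $$ (i,j))) {..<n} * vnorm x"
      unfolding vnorm_L2 using x by simp
    finally have "cmod ((A *\<^sub>v x) $ i) \<le> L2_set (\<lambda>j. cmod (A $$ (i,j))) {..<n} * vnorm x" .
    hence "(cmod ((A *\<^sub>v x) $ i))\<^sup>2 \<le> (L2_set (\<lambda>j. cmod (A $$ (i,j))) {..<n} * vnorm x)\<^sup>2"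
      by (rule power_mono) simp
    also have "\<dots> = (\<Sum>j<n. (cmod (A $$ (i,j)))\<^sup>2) * (vnorm x)\<^sup>2"
      unfolding power_mult_distrib L2_set_def by (simp add: sum_nonneg)
    finally show ?thesis .
  qed
  have "(vnorm (A *\<^sub>v x))\<^sup>2 = (\<Sum>i<m. (cmod ((A *\<^sub>v x) $ i))\<^sup>2)"
    unfolding vnorm_sq using A by simp
  also have "\<dots> \<le> (\<Sum>i<m. (\<Sum>j<n. (cmod (A $$ (i,j)))\<^sup>2) * (vnorm x)\<^sup>2)"
    by (rule sum_mono) (use row in auto)
  also have "\<dots> = (frob A * vnorm x)\<^sup>2"
    unfolding frob_def power_mult_distrib using A by (simp add: sum_distrib_right sum_nonneg)
  finally show ?thesis
    by (rule power2_le_imp_le) (simp add: frob_nonneg vnorm_nonneg)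
qed


lemma spec_bdd: "bdd_above {vnorm (A *\<^sub>v x) | x. x \<in> carrier_vec (dim_col A) \<and> vnorm x \<le> 1}"
proof (rule bdd_aboveI[of _ "frob A"], clarify)
  fix x assume x: "x \<in> carrier_vec (dim_col A)" "vnorm x \<le> 1"
  have "vnorm (A *\<^sub>v x) \<le> frob A * vnorm x" by (rule frob_bound[OF _ x(1)]) auto
  also have "\<dots> \<le> frob A * 1" by (rule mult_left_mono[OF x(2) frob_nonneg])
  finally show "vnorm (A *\<^sub>v x) \<le> frob A" by simp
qed

lemma spec_norm_ge: assumes x: "x \<in> carrier_vec (dim_col A)"
  shows "vnorm (A *\<^sub>v x) \<le> spec_norm A * vnorm x"
proof (cases "vnorm x = 0")
  case True
  hence "x = 0\<^sub>v (dim_col A)" using vnorm_eq_0[OF x] by simp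
  hence "A *\<^sub>v x = 0\<^sub>v (dim_row A)" using mult_mat_vec_zero_right[of A "dim_row A" "dim_col A"] by simp
  thus ?thesis using True by simp
next
  case False
  hence pos: "vnorm x > 0" using vnorm_nonneg[of x] by simp
  define y where "y = (1 / vnorm x) \<cdot>\<^sub>v x"
  have y: "y \<in> carrier_vec (dim_col A)" "vnorm y \<le> 1"
    using x pos unfolding y_def by (auto simp: vnorm_smult norm_divide)
  have "vnorm (A *\<^sub>v y) \<le> spec_norm A"
    unfolding spec_norm_def by (rule cSup_upper[OF _ spec_bdd]) (use y in blast)
  moreover have "A *\<^sub>v y = (1 / vnorm x) \<cdot>\<^sub>v (A *\<^sub>v x)"
    unfolding y_def by (rule mult_mat_vec[OF _ x]) auto
  ultimately have "vnorm (A *\<^sub>v x) / vnorm x \<le> spec_norm A"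
    using pos by (simp add: vnorm_smult norm_divide)
  thus ?thesis using pos by (simp add: divide_le_eq ac_simps)
qed

lemma spec_norm_le: assumes c: "c \<ge> 0" and le: "\<And>x. x \<in> carrier_vec (dim_col A) \<Longrightarrow> vnorm (A *\<^sub>v x) \<le> c * vnorm x"
  shows "spec_norm A \<le> c"
  unfolding spec_norm_def
proof (rule cSup_least)
  have "vnorm (A *\<^sub>v 0\<^sub>v (dim_col A)) \<in> {vnorm (A *\<^sub>v x) | x. x \<in> carrier_vec (dim_col A) \<and> vnorm x \<le> 1}"
    by (intro CollectI exI[of _ "0\<^sub>v (dim_col A)"]) simp
  thus "{vnorm (A *\<^sub>v x) | x. x \<in> carrier_vec (dim_col A) \<and> vnorm x \<le> 1} \<noteq> {}" by blast
next
  fix r assume "r \<in> {vnorm (A *\<^sub>v x) | x. x \<in> carrier_vec (dim_col A) \<and> vnorm x \<le> 1}"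
  then obtain x where x: "x \<in> carrier_vec (dim_col A)" "vnorm x \<le> 1" and r: "r = vnorm (A *\<^sub>v x)" by auto
  have "r \<le> c * vnorm x" using le[OF x(1)] r by simp
  also have "\<dots> \<le> c * 1" by (rule mult_left_mono[OF x(2) c])
  finally show "r \<le> c" by simp
qed

lemma spec_norm_nonneg: "spec_norm A \<ge> 0"
proof -
  have "vnorm (A *\<^sub>v 0\<^sub>v (dim_col A)) \<le> spec_norm A"
    unfolding spec_norm_def by (rule cSup_upper[OF _ spec_bdd]) auto
  thus ?thesis using vnorm_nonneg order.trans by blast
qed

lemma cinner_zero_left: "cinner (0\<^sub>v n) y = 0"
  unfolding cinner_def by simp

lemma cmod_cinner_self: "cmod (cinner v v) = (vnorm v)\<^sup>2"
  unfolding cinner_self norm_of_real by simp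

lemma pi_contract: assumes P: "partial_isometry P" and x: "x \<in> carrier_vec (dim_col P)"
  shows "vnorm (P *\<^sub>v x) \<le> vnorm x"
proof -
  define m n where "m = dim_row P" and "n = dim_col P"
  have Pc: "P \<in> carrier_mat m n" unfolding m_def n_def by auto
  define w where "w = P *\<^sub>v x"
  have w: "w \<in> carrier_vec m" unfolding w_def m_def by (intro carrier_vecI) simp
  define z where "z = adj P *\<^sub>v w"
  have z: "z \<in> carrier_vec n" unfolding z_def using adj_carrier[OF Pc] w by auto
  have perp: "cinner z y = 0" if y: "y \<in> carrier_vec n" "P *\<^sub>v y = 0\<^sub>v m" for y
  proof -
    have "cinner z y = cnj (cinner y z)" by (rule cinner_sym) (use y z in auto)
    also have "cinner y z = cinner (P *\<^sub>v y) w" unfolding z_def by (rule cinner_adj[OF Pc y(1) w, symmetric])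
    finally show ?thesis using y(2) cinner_zero_left by simp
  qed
  have Pz: "vnorm (P *\<^sub>v z) = vnorm z"
    using P z perp unfolding partial_isometry_def m_def n_def by auto
  have "(vnorm z)\<^sup>2 = cmod (cinner z z)" by (simp add: cmod_cinner_self)
  also have "cinner z z = cnj (cinner z (adj P *\<^sub>v w))" unfolding z_def
    by (rule cinner_sym) (use z z_def in auto)
  also have "cinner z (adj P *\<^sub>v w) = cinner (P *\<^sub>v z) w" by (rule cinner_adj[OF Pc z w, symmetric])
  finally have "(vnorm z)\<^sup>2 = cmod (cinner (P *\<^sub>v z) w)" by simp
  also have "\<dots> \<le> vnorm (P *\<^sub>v z) * vnorm w" by (rule cinner_CS) (use Pc z w in auto)
  finally have zw: "vnorm z \<le> vnorm w" unfolding Pz by (rule sq_le_mult_imp_le) (auto simp: vnorm_nonneg)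
  have "(vnorm w)\<^sup>2 = cmod (cinner w w)" by (simp add: cmod_cinner_self)
  also have "cinner w w = cinner x z" unfolding w_def z_def by (rule cinner_adj[OF Pc x[folded n_def] w[unfolded w_def]])
  also have "cmod (cinner x z) \<le> vnorm x * vnorm z" by (rule cinner_CS) (use x z n_def in auto)
  also have "\<dots> \<le> vnorm x * vnorm w" by (intro mult_left_mono zw vnorm_nonneg)
  finally have "(vnorm w)\<^sup>2 \<le> vnorm w * vnorm x" by (simp add: mult.commute)
  hence "vnorm w \<le> vnorm x" by (rule sq_le_mult_imp_le) (auto simp: vnorm_nonneg)
  thus ?thesis unfolding w_def .
qed

lemma cinner_minus_right: assumes "dim_vec y = dim_vec x" "dim_vec z = dim_vec x"
  shows "cinner x (y - z) = cinner x y - cinner x z"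
  unfolding cinner_def using assms by (simp add: right_diff_distrib sum_subtractf)

definition outer :: "complex vec \<Rightarrow> complex vec \<Rightarrow> complex mat" where
  "outer u v = mat (dim_vec u) (dim_vec v) (\<lambda>(i,j). u $ i * cnj (v $ j))"

lemma outer_carrier: "u \<in> carrier_vec m \<Longrightarrow> v \<in> carrier_vec k \<Longrightarrow> outer u v \<in> carrier_mat m k"
  unfolding outer_def by auto

lemma outer_mult: assumes "u \<in> carrier_vec m" "v \<in> carrier_vec k" "x \<in> carrier_vec k"
  shows "outer u v *\<^sub>v x = cinner x v \<cdot>\<^sub>v u"
  using assms unfolding outer_def cinner_def
  by (intro eq_vecI) (auto simp: scalar_prod_def sum_distrib_left atLeast0LessThan ac_simps)

lemma pi_outer: assumes u: "u \<in> carrier_vec m" "vnorm u = 1" and v: "v \<in> carrier_vec k" "vnorm v = 1"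
  shows "partial_isometry (outer u v)"
  unfolding partial_isometry_def
proof (intro ballI impI)
  have oc: "outer u v \<in> carrier_mat m k" by (rule outer_carrier[OF u(1) v(1)])
  fix x assume x: "x \<in> carrier_vec (dim_col (outer u v))"
    and perp: "\<forall>y\<in>carrier_vec (dim_col (outer u v)). outer u v *\<^sub>v y = 0\<^sub>v (dim_row (outer u v)) \<longrightarrow> cinner x y = 0"
  have xk: "x \<in> carrier_vec k" using x oc by auto
  define c where "c = cinner x v"
  define r where "r = x - c \<cdot>\<^sub>v v"
  have r: "r \<in> carrier_vec k" unfolding r_def using xk v by auto
  have vv: "cinner v v = 1" using cinner_self[of v] v by simp
  have "cinner r v = c - c * cinner v v" unfolding r_def c_def
    by (subst cinner_minus_left) (use xk v in \<open>auto simp: cinner_smult_left\<close>)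
  hence rv: "cinner r v = 0" using vv by simp
  have "outer u v *\<^sub>v r = 0\<^sub>v m" unfolding outer_mult[OF u(1) v(1) r] rv using u(1) by (intro eq_vecI) auto
  hence "cinner x r = 0" using perp r oc by auto
  moreover have "cinner x r = cinner x x - cnj c * c"
    unfolding r_def using xk v
    by (subst cinner_minus_right) (auto simp: cinner_smult_right c_def)
  ultimately have eq: "cinner x x = cnj c * c" by simp
  have cc: "cnj c * c = complex_of_real ((cmod c)\<^sup>2)"
    by (subst complex_norm_square) (simp add: mult.commute)
  have "complex_of_real ((vnorm x)\<^sup>2) = complex_of_real ((cmod c)\<^sup>2)"
    by (metis cinner_self cc eq)
  hence "(vnorm x)\<^sup>2 = (cmod c)\<^sup>2" by (simp only: of_real_eq_iff)
  hence "vnorm x = cmod c" using vnorm_nonneg[of x] by (simp add: power2_eq_iff_nonneg)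
  thus "vnorm (outer u v *\<^sub>v x) = vnorm x"
    unfolding outer_mult[OF u(1) v(1) xk] vnorm_smult c_def u(2) by simp
qed

lemma pi_zero: "partial_isometry (0\<^sub>m m k)"
  unfolding partial_isometry_def
proof (intro ballI impI)
  fix x assume x: "x \<in> carrier_vec (dim_col (0\<^sub>m m k :: complex mat))"
    and perp: "\<forall>y\<in>carrier_vec (dim_col (0\<^sub>m m k :: complex mat)). 0\<^sub>m m k *\<^sub>v y = 0\<^sub>v (dim_row (0\<^sub>m m k :: complex mat)) \<longrightarrow> cinner x y = 0"
  have xk: "x \<in> carrier_vec k" using x by auto
  have "cinner x x = 0" using perp xk zero_mult_mat_vec[OF xk, of m] by auto
  hence "vnorm x = 0" unfolding cinner_self by simp
  thus "vnorm (0\<^sub>m m k *\<^sub>v x) = vnorm x" using zero_mult_mat_vec[OF xk, of m] by simp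
qed

lemma pi_smult: assumes P: "partial_isometry P" and c: "cmod c = 1"
  shows "partial_isometry (c \<cdot>\<^sub>m P)"
  unfolding partial_isometry_def
proof (intro ballI impI)
  have Pc: "P \<in> carrier_mat (dim_row P) (dim_col P)" by auto
  have c0: "c \<noteq> 0" using c by auto
  fix x assume x: "x \<in> carrier_vec (dim_col (c \<cdot>\<^sub>m P))"
    and perp: "\<forall>y\<in>carrier_vec (dim_col (c \<cdot>\<^sub>m P)). c \<cdot>\<^sub>m P *\<^sub>v y = 0\<^sub>v (dim_row (c \<cdot>\<^sub>m P)) \<longrightarrow> cinner x y = 0"
  have perp': "\<forall>y\<in>carrier_vec (dim_col P). P *\<^sub>v y = 0\<^sub>v (dim_row P) \<longrightarrow> cinner x y = 0"
  proof (intro ballI impI)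
    fix y assume y: "y \<in> carrier_vec (dim_col P)" "P *\<^sub>v y = 0\<^sub>v (dim_row P)"
    have "c \<cdot>\<^sub>m P *\<^sub>v y = 0\<^sub>v (dim_row P)" using smult_mat_mult_vec[OF Pc y(1)] y(2) by auto
    thus "cinner x y = 0" using perp y by auto
  qed
  have "vnorm (P *\<^sub>v x) = vnorm x" using P perp' x unfolding partial_isometry_def by auto
  thus "vnorm (c \<cdot>\<^sub>m P *\<^sub>v x) = vnorm x"
    using smult_mat_mult_vec[OF Pc, of x c] x by (auto simp: vnorm_smult c)
qed



definition blocks :: "complex mat list \<Rightarrow> nat list \<Rightarrow> nat list \<Rightarrow> bool" where
  "blocks Ds ps ks \<longleftrightarrow> length Ds = length ps \<and> length ks = length ps \<and>
     (\<forall>i<length ps. Ds ! i \<in> carrier_mat (ps ! i) (ks ! i))"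

lemma blocks_Nil[simp]: "blocks Ds [] ks \<longleftrightarrow> Ds = [] \<and> ks = []"
  unfolding blocks_def by auto

lemma blocks_Cons[simp]: "blocks (D # Ds) (p # ps) (k # ks) \<longleftrightarrow> D \<in> carrier_mat p k \<and> blocks Ds ps ks"
  unfolding blocks_def by (auto simp: nth_Cons less_Suc_eq_0_disj split: nat.splits)

lemma blocks_ConsE: assumes "blocks Ds ps ks" "Ds = D # Ds'"
  obtains p ps' k ks' where "ps = p # ps'" "ks = k # ks'" "D \<in> carrier_mat p k" "blocks Ds' ps' ks'"
proof -
  from assms obtain p ps' where ps: "ps = p # ps'" unfolding blocks_def by (cases ps) auto
  from assms ps obtain k ks' where ks: "ks = k # ks'" unfolding blocks_def by (cases ks) auto
  show ?thesis using that[OF ps ks] assms ps ks by auto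
qed

lemma diag_carrier: "blocks Ds ps ks \<Longrightarrow> diag_block_mat Ds \<in> carrier_mat (sum_list ps) (sum_list ks)"
proof (induct Ds arbitrary: ps ks)
  case Nil thus ?case by (auto simp: blocks_def)
next
  case (Cons D Ds)
  from blocks_ConsE[OF Cons(2) refl] obtain p ps' k ks' where
    *: "ps = p # ps'" "ks = k # ks'" "D \<in> carrier_mat p k" "blocks Ds ps' ks'" .
  from Cons(1)[OF *(4)] *(3) show ?case unfolding * by (auto simp: Let_def)
qed

lemma diag_cons_mult: assumes D: "D \<in> carrier_mat r c" and R: "diag_block_mat Ds \<in> carrier_mat r' c'"
  and a: "a \<in> carrier_vec c" and d: "d \<in> carrier_vec c'"
  shows "diag_block_mat (D # Ds) *\<^sub>v (a @\<^sub>v d) = (D *\<^sub>v a) @\<^sub>v (diag_block_mat Ds *\<^sub>v d)"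
proof -
  have "diag_block_mat (D # Ds) = four_block_mat D (0\<^sub>m r c') (0\<^sub>m r' c) (diag_block_mat Ds)"
    using D R by (simp add: Let_def)
  also have "\<dots> *\<^sub>v (a @\<^sub>v d) = (D *\<^sub>v a + 0\<^sub>m r c' *\<^sub>v d) @\<^sub>v (0\<^sub>m r' c *\<^sub>v a + diag_block_mat Ds *\<^sub>v d)"
    by (rule four_block_mat_mult_vec[OF D _ _ R a d]) auto
  also have "D *\<^sub>v a + 0\<^sub>m r c' *\<^sub>v d = D *\<^sub>v a"
    using D a d by (simp add: zero_mult_mat_vec)
  also have "0\<^sub>m r' c *\<^sub>v a + diag_block_mat Ds *\<^sub>v d = diag_block_mat Ds *\<^sub>v d"
    using R a d by (simp add: zero_mult_mat_vec)
  finally show ?thesis .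
qed

lemma vnorm_append_le: assumes "vnorm a \<le> vnorm a'" "vnorm b \<le> vnorm b'"
  shows "vnorm (a @\<^sub>v b) \<le> vnorm (a' @\<^sub>v b')"
proof (rule power2_le_imp_le)
  show "(vnorm (a @\<^sub>v b))\<^sup>2 \<le> (vnorm (a' @\<^sub>v b'))\<^sup>2"
    unfolding vnorm_append using assms by (intro add_mono power_mono) (auto simp: vnorm_nonneg)
qed (simp add: vnorm_nonneg)

lemma diag_contract: assumes "blocks Ds ps ks"
  and "\<And>i x. i < length ps \<Longrightarrow> x \<in> carrier_vec (ks ! i) \<Longrightarrow> vnorm ((Ds ! i) *\<^sub>v x) \<le> vnorm x"
  and "x \<in> carrier_vec (sum_list ks)"
  shows "vnorm (diag_block_mat Ds *\<^sub>v x) \<le> vnorm x"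
  using assms
proof (induct Ds arbitrary: ps ks x)
  case Nil thus ?case using zero_mult_mat_vec[of x 0 0] vnorm_nonneg[of x] by (auto simp: blocks_def vnorm_def)
next
  case (Cons D Ds)
  from blocks_ConsE[OF Cons(2) refl] obtain p ps' k ks' where
    *: "ps = p # ps'" "ks = k # ks'" "D \<in> carrier_mat p k" "blocks Ds ps' ks'" .
  have x: "x \<in> carrier_vec (k + sum_list ks')" using Cons(4) * by simp
  define a d where "a = vec_first x k" and "d = vec_last x (sum_list ks')"
  have xad: "x = a @\<^sub>v d" unfolding a_def d_def using x by simp
  have a: "a \<in> carrier_vec k" and d: "d \<in> carrier_vec (sum_list ks')" unfolding a_def d_def by auto
  have R: "diag_block_mat Ds \<in> carrier_mat (sum_list ps') (sum_list ks')" by (rule diag_carrier[OF *(4)])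
  have "diag_block_mat (D # Ds) *\<^sub>v x = (D *\<^sub>v a) @\<^sub>v (diag_block_mat Ds *\<^sub>v d)"
    unfolding xad by (rule diag_cons_mult[OF *(3) R a d])
  also have "vnorm \<dots> \<le> vnorm (a @\<^sub>v d)"
  proof (rule vnorm_append_le)
    show "vnorm (D *\<^sub>v a) \<le> vnorm a" using Cons(3)[of 0 a] a * by simp
    have h: "vnorm ((Ds ! i) *\<^sub>v z) \<le> vnorm z" if "i < length ps'" "z \<in> carrier_vec (ks' ! i)" for i z
      using Cons(3)[of "Suc i" z] * that by simp
    show "vnorm (diag_block_mat Ds *\<^sub>v d) \<le> vnorm d"
      by (rule Cons(1)[OF *(4) h d])
  qed
  finally show ?case unfolding xad .
qed

lemma smult_zero_mat': "c \<cdot>\<^sub>m (0\<^sub>m r k :: complex mat) = 0\<^sub>m r k"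
  by (intro eq_matI) auto

lemma diag_smult: "blocks Ds ps ks \<Longrightarrow> diag_block_mat (map (\<lambda>D. c \<cdot>\<^sub>m D) Ds) = c \<cdot>\<^sub>m diag_block_mat Ds"
proof (induct Ds arbitrary: ps ks)
  case Nil thus ?case by (auto intro!: eq_matI)
next
  case (Cons D Ds)
  from blocks_ConsE[OF Cons(2) refl] obtain p ps' k ks' where
    *: "ps = p # ps'" "ks = k # ks'" "D \<in> carrier_mat p k" "blocks Ds ps' ks'" .
  have R: "diag_block_mat Ds \<in> carrier_mat (sum_list ps') (sum_list ks')" by (rule diag_carrier[OF *(4)])
  show ?case
    using R *(3) Cons(1)[OF *(4)]
    by (simp add: Let_def smult_four_block_mat[of D p k _ "sum_list ks'" _ "sum_list ps'"] smult_zero_mat')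
qed

lemma block_bound: assumes D: "D \<in> carrier_mat p k" and R: "diag_block_mat Ds \<in> carrier_mat p' k'"
  and bnd: "\<And>v. v \<in> carrier_vec (k + k') \<Longrightarrow> vnorm (diag_block_mat (D # Ds) *\<^sub>v v) \<le> \<beta> * vnorm v"
  shows "\<And>a::complex vec. a \<in> carrier_vec k \<Longrightarrow> vnorm (D *\<^sub>v a) \<le> \<beta> * vnorm a"
    and "\<And>d::complex vec. d \<in> carrier_vec k' \<Longrightarrow> vnorm (diag_block_mat Ds *\<^sub>v d) \<le> \<beta> * vnorm d"
proof -
  fix a :: "complex vec" assume a: "a \<in> carrier_vec k"
  have "vnorm (D *\<^sub>v a) \<le> vnorm ((D *\<^sub>v a) @\<^sub>v (diag_block_mat Ds *\<^sub>v 0\<^sub>v k'))"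
    by (rule power2_le_imp_le) (auto simp: vnorm_append vnorm_nonneg)
  also have "\<dots> = vnorm (diag_block_mat (D # Ds) *\<^sub>v (a @\<^sub>v 0\<^sub>v k'))"
    using diag_cons_mult[OF D R a zero_carrier_vec[of k']] by simp
  also have "\<dots> \<le> \<beta> * vnorm (a @\<^sub>v 0\<^sub>v k')" by (rule bnd) (use a in auto)
  also have "vnorm (a @\<^sub>v 0\<^sub>v k') = vnorm a"
    by (rule power2_eq_imp_eq) (auto simp: vnorm_append vnorm_nonneg)
  finally show "vnorm (D *\<^sub>v a) \<le> \<beta> * vnorm a" .
next
  fix d :: "complex vec" assume d: "d \<in> carrier_vec k'"
  have "vnorm (diag_block_mat Ds *\<^sub>v d) \<le> vnorm ((D *\<^sub>v 0\<^sub>v k) @\<^sub>v (diag_block_mat Ds *\<^sub>v d))"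
    by (rule power2_le_imp_le) (auto simp: vnorm_append vnorm_nonneg)
  also have "\<dots> = vnorm (diag_block_mat (D # Ds) *\<^sub>v (0\<^sub>v k @\<^sub>v d))"
    using diag_cons_mult[OF D R zero_carrier_vec[of k] d] by simp
  also have "\<dots> \<le> \<beta> * vnorm (0\<^sub>v k @\<^sub>v d)" by (rule bnd) (use d in auto)
  also have "vnorm (0\<^sub>v k @\<^sub>v d) = vnorm d"
    by (rule power2_eq_imp_eq) (auto simp: vnorm_append vnorm_nonneg)
  finally show "vnorm (diag_block_mat Ds *\<^sub>v d) \<le> \<beta> * vnorm d" .
qed

definition sc :: "complex list \<Rightarrow> complex mat list \<Rightarrow> complex mat list" where
  "sc cs Ps = map (\<lambda>(c,P). c \<cdot>\<^sub>m P) (zip cs Ps)"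

lemma sc_Cons[simp]: "sc (c # cs) (P # Ps) = (c \<cdot>\<^sub>m P) # sc cs Ps"
  unfolding sc_def by simp

lemma sc_Nil[simp]: "sc [] Ps = []" "sc cs [] = []"
  unfolding sc_def by auto

lemma blocks_sc: "blocks Ps ps ks \<Longrightarrow> length cs = length ps \<Longrightarrow> blocks (sc cs Ps) ps ks"
  unfolding blocks_def sc_def by auto

lemma one_block: assumes D: "D \<in> carrier_mat r c" and \<beta>: "\<beta> > 0"
  and bnd: "\<And>a. a \<in> carrier_vec c \<Longrightarrow> vnorm (D *\<^sub>v a) \<le> \<beta> * vnorm a"
  and y: "y \<in> carrier_vec c"
  shows "\<exists>P c0. P \<in> carrier_mat r c \<and> partial_isometry P \<and> cmod c0 \<le> 1 \<and>
     (c0 \<cdot>\<^sub>m P) *\<^sub>v y = complex_of_real (1 / \<beta>) \<cdot>\<^sub>v (D *\<^sub>v y)"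
proof (cases "D *\<^sub>v y = 0\<^sub>v r")
  case True
  show ?thesis
    by (rule exI[of _ "0\<^sub>m r c"], rule exI[of _ 0])
      (use True y pi_zero in \<open>auto simp: zero_mult_mat_vec smult_zero_mat'\<close>)
next
  case False
  define x where "x = D *\<^sub>v y"
  have x: "x \<in> carrier_vec r" unfolding x_def using D y by auto
  have nx: "vnorm x > 0" using False vnorm_eq_0[OF x] vnorm_nonneg[of x] unfolding x_def by force
  have le: "vnorm x \<le> \<beta> * vnorm y" unfolding x_def by (rule bnd[OF y])
  have ny: "vnorm y > 0"
  proof (rule ccontr)
    assume "\<not> vnorm y > 0" hence "vnorm y = 0" using vnorm_nonneg[of y] by simp
    thus False using le nx by simp
  qed
  define u where "u = (1 / vnorm x) \<cdot>\<^sub>v x"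
  define v where "v = (1 / vnorm y) \<cdot>\<^sub>v y"
  have u: "u \<in> carrier_vec r" "vnorm u = 1" unfolding u_def using x nx by (auto simp: vnorm_smult norm_divide)
  have v: "v \<in> carrier_vec c" "vnorm v = 1" unfolding v_def using y ny by (auto simp: vnorm_smult norm_divide)
  define c0 where "c0 = complex_of_real (vnorm x / (\<beta> * vnorm y))"
  have r1: "vnorm x / (\<beta> * vnorm y) \<le> 1" using le ny \<beta> by (simp add: divide_le_eq)
  have "cmod c0 = \<bar>vnorm x / (\<beta> * vnorm y)\<bar>" unfolding c0_def norm_of_real ..
  hence c0: "cmod c0 \<le> 1" using r1 nx ny \<beta> by simp
  have "cinner y v = complex_of_real (vnorm y)"
  proof -
    have "cinner y v = cnj (complex_of_real (1 / vnorm y)) * cinner y y"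
      unfolding v_def by (rule cinner_smult_right) auto
    also have "\<dots> = complex_of_real (vnorm y)" unfolding cinner_self using ny
      by (simp add: power2_eq_square)
    finally show ?thesis .
  qed
  hence Py: "outer u v *\<^sub>v y = complex_of_real (vnorm y / vnorm x) \<cdot>\<^sub>v x"
    unfolding outer_mult[OF u(1) v(1) y] by (simp add: u_def smult_smult_assoc)
  have "(c0 \<cdot>\<^sub>m outer u v) *\<^sub>v y = (c0 * complex_of_real (vnorm y / vnorm x)) \<cdot>\<^sub>v x"
    by (subst smult_mat_mult_vec[OF outer_carrier[OF u(1) v(1)] y]) (simp add: Py smult_smult_assoc)
  also have "c0 * complex_of_real (vnorm y / vnorm x) = complex_of_real (1 / \<beta>)"
  proof -
    have "vnorm x / (\<beta> * vnorm y) * (vnorm y / vnorm x) = 1 / \<beta>"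
      using nx ny \<beta> by (simp add: divide_simps)
    thus ?thesis unfolding c0_def of_real_mult[symmetric] by (simp only:)
  qed
  finally have eqn: "(c0 \<cdot>\<^sub>m outer u v) *\<^sub>v y = complex_of_real (1 / \<beta>) \<cdot>\<^sub>v x" .
  show ?thesis
    by (intro exI[of _ "outer u v"] exI[of _ c0] conjI)
      (use outer_carrier[OF u(1) v(1)] pi_outer[OF u v] c0 eqn x_def in auto)
qed




lemma dim0_eq: "dim_vec (a::'a vec) = 0 \<Longrightarrow> dim_vec b = 0 \<Longrightarrow> a = b"
  by (rule eq_vecI) auto

lemma construct: assumes "blocks Ds ps ks" and \<beta>: "\<beta> > 0"
  and "\<And>v. v \<in> carrier_vec (sum_list ks) \<Longrightarrow> vnorm (diag_block_mat Ds *\<^sub>v v) \<le> \<beta> * vnorm v"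
  and "y \<in> carrier_vec (sum_list ks)"
  shows "\<exists>Ps cs. blocks Ps ps ks \<and> (\<forall>i<length ps. partial_isometry (Ps ! i)) \<and> length cs = length ps
    \<and> (\<forall>i<length ps. cmod (cs ! i) \<le> 1) \<and>
    diag_block_mat (sc cs Ps) *\<^sub>v y = complex_of_real (1 / \<beta>) \<cdot>\<^sub>v (diag_block_mat Ds *\<^sub>v y)"
  using assms(1,3,4)
proof (induct Ds arbitrary: ps ks y)
  case Nil
  hence "ps = []" "ks = []" by (auto simp: blocks_def)
  have e: "diag_block_mat (sc [] []) *\<^sub>v y = complex_of_real (1 / \<beta>) \<cdot>\<^sub>v (diag_block_mat [] *\<^sub>v y)"
    by (rule dim0_eq) (simp_all only: sc_Nil diag_block_mat.simps dim_mult_mat_vec index_zero_mat index_smult_vec)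
  show ?case using e \<open>ps = []\<close> \<open>ks = []\<close> by (intro exI[of _ "[]"] conjI) (simp_all add: blocks_def)
next
  case (Cons D Ds)
  from blocks_ConsE[OF Cons(2) refl] obtain p ps' k ks' where
    *: "ps = p # ps'" "ks = k # ks'" "D \<in> carrier_mat p k" "blocks Ds ps' ks'" .
  have R: "diag_block_mat Ds \<in> carrier_mat (sum_list ps') (sum_list ks')" by (rule diag_carrier[OF *(4)])
  have bnd: "\<And>v. v \<in> carrier_vec (k + sum_list ks') \<Longrightarrow> vnorm (diag_block_mat (D # Ds) *\<^sub>v v) \<le> \<beta> * vnorm v"
    using Cons(3) * by simp
  note bb = block_bound[OF *(3) R bnd]
  have y: "y \<in> carrier_vec (k + sum_list ks')" using Cons(4) * by simp
  define a d where "a = vec_first y k" and "d = vec_last y (sum_list ks')"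
  have yad: "y = a @\<^sub>v d" unfolding a_def d_def using y by simp
  have a: "a \<in> carrier_vec k" and d: "d \<in> carrier_vec (sum_list ks')" unfolding a_def d_def by auto
  from one_block[OF *(3) \<beta> bb(1) a] obtain P c0 where
    P: "P \<in> carrier_mat p k" "partial_isometry P" "cmod c0 \<le> 1" "(c0 \<cdot>\<^sub>m P) *\<^sub>v a = complex_of_real (1 / \<beta>) \<cdot>\<^sub>v (D *\<^sub>v a)"
    by blast
  from Cons(1)[OF *(4) bb(2) d] obtain Ps cs where
    IH: "blocks Ps ps' ks'" "\<forall>i<length ps'. partial_isometry (Ps ! i)" "length cs = length ps'"
      "\<forall>i<length ps'. cmod (cs ! i) \<le> 1"
      "diag_block_mat (sc cs Ps) *\<^sub>v d = complex_of_real (1 / \<beta>) \<cdot>\<^sub>v (diag_block_mat Ds *\<^sub>v d)" by blast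
  have R2: "diag_block_mat (sc cs Ps) \<in> carrier_mat (sum_list ps') (sum_list ks')"
    by (rule diag_carrier[OF blocks_sc[OF IH(1,3)]])
  have cP: "c0 \<cdot>\<^sub>m P \<in> carrier_mat p k" using P(1) by simp
  have "diag_block_mat (sc (c0 # cs) (P # Ps)) *\<^sub>v y = ((c0 \<cdot>\<^sub>m P) *\<^sub>v a) @\<^sub>v (diag_block_mat (sc cs Ps) *\<^sub>v d)"
    unfolding yad sc_Cons by (rule diag_cons_mult[OF cP R2 a d])
  also have "\<dots> = (complex_of_real (1 / \<beta>) \<cdot>\<^sub>v (D *\<^sub>v a)) @\<^sub>v (complex_of_real (1 / \<beta>) \<cdot>\<^sub>v (diag_block_mat Ds *\<^sub>v d))"
    unfolding P(4) IH(5) ..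
  also have "\<dots> = complex_of_real (1 / \<beta>) \<cdot>\<^sub>v ((D *\<^sub>v a) @\<^sub>v (diag_block_mat Ds *\<^sub>v d))"
    by (intro eq_vecI) auto
  also have "(D *\<^sub>v a) @\<^sub>v (diag_block_mat Ds *\<^sub>v d) = diag_block_mat (D # Ds) *\<^sub>v y"
    unfolding yad by (rule diag_cons_mult[OF *(3) R a d, symmetric])
  finally have eq: "diag_block_mat (sc (c0 # cs) (P # Ps)) *\<^sub>v y = complex_of_real (1 / \<beta>) \<cdot>\<^sub>v (diag_block_mat (D # Ds) *\<^sub>v y)" .
  show ?case
  proof (intro exI[of _ "P # Ps"] exI[of _ "c0 # cs"] conjI)
    show "blocks (P # Ps) ps ks" using * P(1) IH(1) by simp
    show "\<forall>i<length ps. partial_isometry ((P # Ps) ! i)"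
      using * P(2) IH(2) by (auto simp: nth_Cons split: nat.splits)
    show "length (c0 # cs) = length ps" using * IH(3) by simp
    show "\<forall>i<length ps. cmod ((c0 # cs) ! i) \<le> 1"
      using * P(3) IH(4) by (auto simp: nth_Cons split: nat.splits)
  qed (rule eq)
qed



definition aff :: "(complex \<Rightarrow> complex mat) \<Rightarrow> nat \<Rightarrow> nat \<Rightarrow> bool" where
  "aff F n m \<longleftrightarrow> (\<forall>z. F z \<in> carrier_mat n m) \<and>
     (\<exists>a b. \<forall>z i j. i < n \<longrightarrow> j < m \<longrightarrow> F z $$ (i,j) = a i j + z * b i j)"

lemma pt_eq: "(w::complex) \<noteq> 0 \<Longrightarrow> (x - w*y = 0) = (y = 1/w * x)"
proof -
  assume w: "w \<noteq> 0"
  have "(x - w*y = 0) = (x = w * y)" by simp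
  also have "\<dots> = (y = x / w)" using w by (auto simp: eq_divide_eq mult.commute)
  finally show ?thesis by simp
qed

lemma vec_eq_smult_iff: fixes v u :: "complex vec" assumes v: "v \<in> carrier_vec n" and u: "u \<in> carrier_vec n" and w: "w \<noteq> 0"
  shows "v - w \<cdot>\<^sub>v u = 0\<^sub>v n \<longleftrightarrow> u = (1 / w) \<cdot>\<^sub>v v"
proof -
  have dv: "dim_vec v = n" and du: "dim_vec u = n" using u v by auto
  have "v - w \<cdot>\<^sub>v u = 0\<^sub>v n \<longleftrightarrow> (\<forall>i<n. v $ i - w * u $ i = 0)"
  proof (intro iffI allI impI)
    fix i assume eq: "v - w \<cdot>\<^sub>v u = 0\<^sub>v n" and i: "i < n"
    have "(v - w \<cdot>\<^sub>v u) $ i = 0\<^sub>v n $ i" using eq by simp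
    thus "v $ i - w * u $ i = 0" using i dv du by simp
  next
    assume h: "\<forall>i<n. v $ i - w * u $ i = 0"
    show "v - w \<cdot>\<^sub>v u = 0\<^sub>v n" by (rule eq_vecI) (use h dv du in auto)
  qed
  also have "\<dots> \<longleftrightarrow> (\<forall>i<n. u $ i = 1 / w * v $ i)"
    using pt_eq[OF w] by simp
  also have "\<dots> \<longleftrightarrow> u = (1 / w) \<cdot>\<^sub>v v"
  proof (intro iffI allI impI)
    fix i assume eq: "u = (1 / w) \<cdot>\<^sub>v v" and i: "i < n"
    show "u $ i = 1 / w * v $ i" unfolding eq using i dv by simp
  next
    assume h: "\<forall>i<n. u $ i = 1 / w * v $ i"
    show "u = (1 / w) \<cdot>\<^sub>v v" by (rule eq_vecI) (use h dv du in auto)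
  qed
  finally show ?thesis .
qed

lemma eig_det: fixes C :: "complex mat" assumes C: "C \<in> carrier_mat n n" and w: "w \<noteq> 0"
  shows "det (1\<^sub>m n - w \<cdot>\<^sub>m C) = 0 \<longleftrightarrow> eigenvalue C (1 / w)"
proof -
  have m: "1\<^sub>m n - w \<cdot>\<^sub>m C \<in> carrier_mat n n" using C by auto
  have mv: "(1\<^sub>m n - w \<cdot>\<^sub>m C) *\<^sub>v v = v - w \<cdot>\<^sub>v (C *\<^sub>v v)" if v: "v \<in> carrier_vec n" for v
    using v C by (simp add: minus_mult_distrib_mat_vec[of _ n n] smult_mat_mult_vec)
  have "det (1\<^sub>m n - w \<cdot>\<^sub>m C) = 0 \<longleftrightarrow> (\<exists>v. v \<in> carrier_vec n \<and> v \<noteq> 0\<^sub>v n \<and> (1\<^sub>m n - w \<cdot>\<^sub>m C) *\<^sub>v v = 0\<^sub>v n)"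
    by (rule det_0_iff_vec_prod_zero_field[OF m])
  also have "\<dots> \<longleftrightarrow> (\<exists>v. v \<in> carrier_vec n \<and> v \<noteq> 0\<^sub>v n \<and> C *\<^sub>v v = (1 / w) \<cdot>\<^sub>v v)"
    using mv vec_eq_smult_iff[OF _ _ w] C by (metis mult_mat_vec_carrier)
  also have "\<dots> \<longleftrightarrow> eigenvalue C (1 / w)"
    unfolding eigenvalue_def eigenvector_def using C by auto
  finally show ?thesis .
qed

definition Gx :: "nat \<Rightarrow> (nat \<Rightarrow> nat \<Rightarrow> complex) \<Rightarrow> (nat \<Rightarrow> nat \<Rightarrow> complex) \<Rightarrow> complex \<Rightarrow> complex \<Rightarrow> complex" where
  "Gx n a b w z = (\<Sum>p\<in>{p. p permutes {0..<n}}. signof p *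
      (\<Prod>i=0..<n. ((if i = p i then 1 else 0) - w * (a i (p i) + z * b i (p i)))))"

lemma Gx_det: assumes F: "F z \<in> carrier_mat n n"
  and ab: "\<And>i j. i < n \<Longrightarrow> j < n \<Longrightarrow> F z $$ (i,j) = a i j + z * b i j"
  shows "det (1\<^sub>m n - w \<cdot>\<^sub>m F z) = Gx n a b w z"
proof -
  have pi: "p i < n" if "p permutes {0..<n}" "i < n" for p i
    using that permutes_in_image by fastforce
  show ?thesis
    unfolding Determinant.det_def Gx_def using F
    by (auto intro!: sum.cong prod.cong simp: pi ab)
qed

lemma Gx_cont: "continuous_on UNIV (\<lambda>q::real \<times> complex. Gx n a b (of_real (fst q) * w0) (snd q))"
  unfolding Gx_def by (intro continuous_intros)

lemma Gx_holo: "(\<lambda>z. Gx n a b w z) holomorphic_on S"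
  unfolding Gx_def by (intro holomorphic_intros)

lemma Gx_zero: "Gx n a b 0 z = 1"
proof -
  have "Gx n a b 0 z = Gx n (\<lambda>_ _. 0) (\<lambda>_ _. 0) 0 z" by (simp add: Gx_def)
  also have "\<dots> = det (1\<^sub>m n - 0 \<cdot>\<^sub>m (0\<^sub>m n n :: complex mat))"
    by (rule Gx_det[where F="\<lambda>_. 0\<^sub>m n n" and a="\<lambda>_ _. 0" and b="\<lambda>_ _. 0", symmetric]) auto
  also have "1\<^sub>m n - 0 \<cdot>\<^sub>m (0\<^sub>m n n :: complex mat) = 1\<^sub>m n" by (intro eq_matI) auto
  finally show ?thesis by simp
qed



lemma OV: assumes aff: "aff F n n" and e: "cmod e \<le> 1" and eig: "eigenvalue (F e) lam"
  and \<alpha>: "0 < \<alpha>" "\<alpha> \<le> cmod lam"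
  shows "\<exists>\<zeta> \<mu>. cmod \<zeta> = 1 \<and> eigenvalue (F \<zeta>) \<mu> \<and> \<alpha> \<le> cmod \<mu>"
proof (rule ccontr)
  assume contra: "\<not> ?thesis"
  from aff obtain a b where Fc: "\<And>z. F z \<in> carrier_mat n n"
    and ab: "\<And>z i j. i < n \<Longrightarrow> j < n \<Longrightarrow> F z $$ (i,j) = a i j + z * b i j"
    unfolding aff_def by blast
  define G where "G = Gx n a b"
  have Gdet: "det (1\<^sub>m n - w \<cdot>\<^sub>m F z) = G w z" for w z
    unfolding G_def by (rule Gx_det[OF Fc ab])
  have lam0: "lam \<noteq> 0" using \<alpha> by auto
  define w0 where "w0 = 1 / lam"
  have w00: "w0 \<noteq> 0" unfolding w0_def using lam0 by simp
  have Ge: "G w0 e = 0"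
    unfolding Gdet[symmetric] using eig_det[OF Fc w00] eig unfolding w0_def by simp
  have circ: "G (of_real t * w0) \<zeta> \<noteq> 0" if t: "t \<in> {0..1}" and \<zeta>: "cmod \<zeta> = 1" for t \<zeta>
  proof (cases "t = 0")
    case True thus ?thesis unfolding G_def using Gx_zero by simp
  next
    case False
    hence tpos: "t > 0" using t by simp
    have wt: "of_real t * w0 \<noteq> 0" using tpos w00 by simp
    show ?thesis
    proof
      assume "G (of_real t * w0) \<zeta> = 0"
      hence ev: "eigenvalue (F \<zeta>) (1 / (of_real t * w0))"
        using eig_det[OF Fc wt] Gdet by simp
      have "cmod (1 / (of_real t * w0)) = cmod lam / t"
        unfolding w0_def using tpos lam0 by (simp add: norm_divide norm_mult)
      also have "\<dots> \<ge> cmod lam" using tpos t by (simp add: le_divide_eq mult_left_le)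
      finally have "\<alpha> \<le> cmod (1 / (of_real t * w0))" using \<alpha> by simp
      thus False using contra ev \<zeta> by blast
    qed
  qed
  have e1: "cmod e < 1"
  proof (rule ccontr)
    assume "\<not> cmod e < 1" hence "cmod e = 1" using e by simp
    thus False using contra eig \<alpha> by blast
  qed
  define H where "H = (\<lambda>q::real \<times> complex. G (of_real (fst q) * w0) (snd q))"
  have Hcont: "continuous_on UNIV H" unfolding H_def G_def by (rule Gx_cont)
  define K where "K = ({0..1} \<times> cball 0 1) \<inter> {q. H q = 0}"
  have "closed {q. H q = 0}" by (rule closed_Collect_eq[OF Hcont]) simp
  hence Kc: "compact K" unfolding K_def
    by (intro compact_Int_closed compact_Times compact_Icc compact_cball)
  define Z where "Z = fst ` K"
  have Zc: "compact Z" unfolding Z_def by (rule compact_continuous_image[OF continuous_on_fst[OF continuous_on_id] Kc])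
  have "(1, e) \<in> K" unfolding K_def H_def using e Ge by simp
  hence "Z \<noteq> {}" unfolding Z_def by blast
  from compact_attains_inf[OF Zc this] obtain t0 where t0Z: "t0 \<in> Z" and t0min: "\<And>t. t \<in> Z \<Longrightarrow> t0 \<le> t" by blast
  from t0Z obtain z0 where "(t0, z0) \<in> K" unfolding Z_def by force
  hence t01: "t0 \<in> {0..1}" and z0c: "cmod z0 \<le> 1" and Hz0: "H (t0, z0) = 0" unfolding K_def by auto
  have z0b: "cmod z0 < 1" using circ[OF t01, of z0] Hz0 z0c unfolding H_def by force
  have t0pos: "t0 > 0"
  proof (rule ccontr)
    assume "\<not> t0 > 0" hence "t0 = 0" using t01 by simp
    thus False using Hz0 unfolding H_def G_def by (simp add: Gx_zero)
  qed
  define s where "s = (\<lambda>k::nat. t0 * (1 - 1 / (real k + 2)))"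
  have s_lt: "s k < t0" for k unfolding s_def using t0pos by simp
  have s_ge: "0 \<le> s k" for k unfolding s_def using t0pos by (simp add: field_simps)
  have s01: "s k \<in> {0..1}" for k using s_lt[of k] s_ge[of k] t01 by simp
  have nz: "H (s k, z) \<noteq> 0" if "z \<in> ball 0 1" for k z
  proof
    assume "H (s k, z) = 0"
    hence "(s k, z) \<in> K" unfolding K_def using s01[of k] that by auto
    hence "s k \<in> Z" unfolding Z_def by force
    thus False using t0min s_lt[of k] by force
  qed
  define g where "g = (\<lambda>z. H (t0, z))"
  define FF where "FF = (\<lambda>k z. H (s k, z))"
  have holo: "(\<lambda>z. H (t, z)) holomorphic_on S" for t S
    unfolding H_def G_def by simp (rule Gx_holo)
  have ul: "uniform_limit K' FF g sequentially" if K': "compact K'" "K' \<subseteq> ball 0 1" for K'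
  proof -
    have uc: "uniformly_continuous_on ({0..1} \<times> K') H"
      by (rule compact_uniformly_continuous[OF continuous_on_subset[OF Hcont] compact_Times[OF compact_Icc K'(1)]]) simp
    show ?thesis
      unfolding uniform_limit_iff
    proof (intro allI impI)
      fix \<epsilon> :: real assume \<epsilon>: "\<epsilon> > 0"
      from uc[unfolded uniformly_continuous_on_def, rule_format, OF \<epsilon>] obtain d where d: "d > 0"
        and dH: "\<And>x x'. x \<in> {0..1} \<times> K' \<Longrightarrow> x' \<in> {0..1} \<times> K' \<Longrightarrow> dist x' x < d \<Longrightarrow> dist (H x') (H x) < \<epsilon>"
        by blast
      obtain N :: nat where N: "1 / d < real N" using reals_Archimedean2 by blast
      show "\<forall>\<^sub>F k in sequentially. \<forall>z\<in>K'. dist (FF k z) (g z) < \<epsilon>"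
        unfolding eventually_sequentially
      proof (intro exI allI impI ballI)
        fix k z assume k: "N \<le> k" and z: "z \<in> K'"
        have "t0 - s k = t0 / (real k + 2)" unfolding s_def by (simp add: field_simps)
        also have "\<dots> \<le> 1 / (real k + 2)" using t01 by (simp add: divide_right_mono)
        also have "\<dots> < d"
        proof -
          have "1 / d < real k + 2" using N k by linarith
          thus ?thesis using d by (simp add: field_simps)
        qed
        finally have "t0 - s k < d" .
        hence "dist (s k, z) (t0, z) < d" using s_lt[of k] by (simp add: dist_Pair_Pair dist_real_def)
        thus "dist (FF k z) (g z) < \<epsilon>" unfolding FF_def g_def
          using dH[of "(t0, z)" "(s k, z)"] z s01[of k] t01 by auto
      qed
    qed
  qed
  have nc: "\<not> g constant_on ball 0 1"
  proof
    assume "g constant_on ball 0 1"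
    then obtain c where c: "\<And>z. z \<in> ball 0 1 \<Longrightarrow> g z = c" unfolding constant_on_def by blast
    have "g z0 = 0" unfolding g_def by (rule Hz0)
    hence c0: "c = 0" using c[of z0] z0b by simp
    have gc: "continuous_on UNIV g" unfolding g_def
      by (rule continuous_on_compose2[OF Hcont]) (auto intro!: continuous_intros)
    have "closed {z. g z = 0}" by (rule closed_Collect_eq[OF gc]) simp
    moreover have "ball 0 1 \<subseteq> {z. g z = 0}" using c c0 by auto
    ultimately have "closure (ball (0::complex) 1) \<subseteq> {z. g z = 0}" by (rule closure_minimal[rotated])
    moreover have "(1::complex) \<in> closure (ball 0 1)" by simp
    ultimately have "(1::complex) \<in> {z. g z = 0}" by (rule subsetD)
    hence "g 1 = 0" by simp
    thus False using circ[OF t01, of 1] unfolding g_def H_def by simp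
  qed
  have "g z0 \<noteq> 0"
  proof (rule Hurwitz_no_zeros[of "ball 0 1" FF g])
    show "\<And>k. FF k holomorphic_on ball 0 1" unfolding FF_def by (rule holo)
    show "g holomorphic_on ball 0 1" unfolding g_def by (rule holo)
    show "\<And>K. compact K \<Longrightarrow> K \<subseteq> ball 0 1 \<Longrightarrow> uniform_limit K FF g sequentially" by (rule ul)
    show "\<And>k z. z \<in> ball 0 1 \<Longrightarrow> FF k z \<noteq> 0" unfolding FF_def by (rule nz)
    show "z0 \<in> ball 0 1" using z0b by simp
  qed (use nc in auto)
  thus False using Hz0 unfolding g_def by simp
qed



lemma aff_const: "A \<in> carrier_mat n m \<Longrightarrow> aff (\<lambda>_. A) n m"
  unfolding aff_def by (intro conjI allI exI[of _ "\<lambda>i j. A $$ (i,j)"] exI[of _ "\<lambda>i j. 0"]) auto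

lemma aff_smult: "P \<in> carrier_mat n m \<Longrightarrow> aff (\<lambda>z. z \<cdot>\<^sub>m P) n m"
  unfolding aff_def by (intro conjI allI exI[of _ "\<lambda>i j. 0"] exI[of _ "\<lambda>i j. P $$ (i,j)"]) auto

lemma aff_diag_cons: assumes F: "aff F r c" and R: "aff (\<lambda>z. diag_block_mat (Xs z)) r' c'"
  shows "aff (\<lambda>z. diag_block_mat (F z # Xs z)) (r + r') (c + c')"
proof -
  from F obtain a b where Fc: "\<And>z. F z \<in> carrier_mat r c"
    and ab: "\<And>z i j. i < r \<Longrightarrow> j < c \<Longrightarrow> F z $$ (i,j) = a i j + z * b i j"
    unfolding aff_def by blast
  from R obtain a' b' where Rc: "\<And>z. diag_block_mat (Xs z) \<in> carrier_mat r' c'"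
    and ab': "\<And>z i j. i < r' \<Longrightarrow> j < c' \<Longrightarrow> diag_block_mat (Xs z) $$ (i,j) = a' i j + z * b' i j"
    unfolding aff_def by blast
  have eq: "diag_block_mat (F z # Xs z) = four_block_mat (F z) (0\<^sub>m r c') (0\<^sub>m r' c) (diag_block_mat (Xs z))" for z
    using Fc[of z] Rc[of z] by (simp add: Let_def)
  define A where "A = (\<lambda>i j. if i < r then (if j < c then a i j else 0) else (if j < c then 0 else a' (i - r) (j - c)))"
  define B where "B = (\<lambda>i j. if i < r then (if j < c then b i j else 0) else (if j < c then 0 else b' (i - r) (j - c)))"
  have c1: "\<forall>z. diag_block_mat (F z # Xs z) \<in> carrier_mat (r + r') (c + c')"
    unfolding eq using Fc Rc by auto
  have c2: "\<forall>z i j. i < r + r' \<longrightarrow> j < c + c' \<longrightarrow> diag_block_mat (F z # Xs z) $$ (i, j) = A i j + z * B i j"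
  proof (intro allI impI)
    fix z i j assume i: "i < r + r'" and j: "j < c + c'"
    show "diag_block_mat (F z # Xs z) $$ (i, j) = A i j + z * B i j"
      unfolding eq A_def B_def using Fc[of z] Rc[of z] i j by (auto simp: ab ab')
  qed
  show ?thesis unfolding aff_def using c1 c2 by blast
qed

lemma aff_diag_sc: "blocks Ps ps ks \<Longrightarrow> length cs = length ps \<Longrightarrow>
  aff (\<lambda>z. diag_block_mat (sc (cs[j := z]) Ps)) (sum_list ps) (sum_list ks)"
proof (induct Ps arbitrary: ps ks cs j)
  case Nil
  hence "ps = []" "ks = []" "cs = []" by (auto simp: blocks_def)
  thus ?case by (auto intro: aff_const)
next
  case (Cons P Ps)
  from blocks_ConsE[OF Cons(2) refl] obtain p ps' k ks' where
    *: "ps = p # ps'" "ks = k # ks'" "P \<in> carrier_mat p k" "blocks Ps ps' ks'" .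
  from Cons(3) * obtain c cs' where cs: "cs = c # cs'" "length cs' = length ps'" by (cases cs) auto
  show ?case
  proof (cases j)
    case 0
    have "aff (\<lambda>z. diag_block_mat ((z \<cdot>\<^sub>m P) # sc cs' Ps)) (p + sum_list ps') (k + sum_list ks')"
      by (rule aff_diag_cons[OF aff_smult[OF *(3)] aff_const[OF diag_carrier[OF blocks_sc[OF *(4) cs(2)]]]])
    thus ?thesis using 0 * cs by simp
  next
    case (Suc j')
    have "aff (\<lambda>z. diag_block_mat ((c \<cdot>\<^sub>m P) # sc (cs'[j' := z]) Ps)) (p + sum_list ps') (k + sum_list ks')"
      by (rule aff_diag_cons[OF aff_const Cons(1)[OF *(4) cs(2)]]) (use *(3) in simp)
    thus ?thesis using Suc * cs by simp
  qed
qed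

lemma aff_mult: assumes F: "aff F n m" and M: "M \<in> carrier_mat m q"
  shows "aff (\<lambda>z. F z * M) n q"
proof -
  from F obtain a b where Fc: "\<And>z. F z \<in> carrier_mat n m"
    and ab: "\<And>z i j. i < n \<Longrightarrow> j < m \<Longrightarrow> F z $$ (i,j) = a i j + z * b i j"
    unfolding aff_def by blast
  define A where "A = (\<lambda>i j. \<Sum>l<m. a i l * M $$ (l,j))"
  define B where "B = (\<lambda>i j. \<Sum>l<m. b i l * M $$ (l,j))"
  have c1: "\<forall>z. F z * M \<in> carrier_mat n q" using Fc M by (metis mult_carrier_mat)
  have c2: "\<forall>z i j. i < n \<longrightarrow> j < q \<longrightarrow> (F z * M) $$ (i,j) = A i j + z * B i j"
  proof (intro allI impI)
    fix z i j assume i: "i < n" and j: "j < q"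
    have "(F z * M) $$ (i,j) = (\<Sum>l<m. F z $$ (i,l) * M $$ (l,j))"
      using Fc[of z] M i j by (simp add: scalar_prod_def atLeast0LessThan)
    also have "\<dots> = (\<Sum>l<m. (a i l + z * b i l) * M $$ (l,j))" using ab i by simp
    also have "\<dots> = (\<Sum>l<m. a i l * M $$ (l,j) + z * (b i l * M $$ (l,j)))"
      by (intro sum.cong refl) (simp add: algebra_simps)
    also have "\<dots> = A i j + z * B i j"
      unfolding A_def B_def by (simp add: sum.distrib sum_distrib_left)
    finally show "(F z * M) $$ (i,j) = A i j + z * B i j" .
  qed
  show ?thesis unfolding aff_def using c1 c2 by blast
qed

lemma unimod: assumes B: "blocks Ps ps ks" and M: "M \<in> carrier_mat (sum_list ks) (sum_list ps)"
  and cs: "length cs = length ps" "\<forall>i<length ps. cmod (cs ! i) \<le> 1"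
  and eig: "eigenvalue (diag_block_mat (sc cs Ps) * M) lam" and \<alpha>: "0 < \<alpha>" "\<alpha> \<le> cmod lam"
  shows "\<exists>cs' \<mu>. length cs' = length ps \<and> (\<forall>i<length ps. cmod (cs' ! i) = 1) \<and>
     eigenvalue (diag_block_mat (sc cs' Ps) * M) \<mu> \<and> \<alpha> \<le> cmod \<mu>"
proof -
  have step: "\<exists>cs' \<mu>. length cs' = length ps \<and> (\<forall>i<length ps. cmod (cs' ! i) \<le> 1) \<and>
     (\<forall>i<j. cmod (cs' ! i) = 1) \<and> eigenvalue (diag_block_mat (sc cs' Ps) * M) \<mu> \<and> \<alpha> \<le> cmod \<mu>"
    if "j \<le> length ps" for j
    using that
  proof (induct j)
    case 0 thus ?case using cs eig \<alpha> by blast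
  next
    case (Suc j)
    then obtain cs' \<mu> where IH: "length cs' = length ps" "\<forall>i<length ps. cmod (cs' ! i) \<le> 1"
      "\<forall>i<j. cmod (cs' ! i) = 1" "eigenvalue (diag_block_mat (sc cs' Ps) * M) \<mu>" "\<alpha> \<le> cmod \<mu>"
      by auto
    have j: "j < length ps" using Suc by simp
    define F where "F = (\<lambda>z. diag_block_mat (sc (cs'[j := z]) Ps) * M)"
    have affF: "aff F (sum_list ps) (sum_list ps)" unfolding F_def
      by (rule aff_mult[OF aff_diag_sc[OF B IH(1)] M])
    have "F (cs' ! j) = diag_block_mat (sc cs' Ps) * M" unfolding F_def by simp
    hence eigF: "eigenvalue (F (cs' ! j)) \<mu>" using IH(4) by simp
    from OV[OF affF _ eigF \<alpha>(1) IH(5)] IH(2) j obtain \<zeta> \<mu>' where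
      z: "cmod \<zeta> = 1" "eigenvalue (F \<zeta>) \<mu>'" "\<alpha> \<le> cmod \<mu>'" by blast
    show ?case
    proof (intro exI[of _ "cs'[j := \<zeta>]"] exI[of _ \<mu>'] conjI)
      show "length (cs'[j := \<zeta>]) = length ps" using IH(1) by simp
      show "\<forall>i<length ps. cmod (cs'[j := \<zeta>] ! i) \<le> 1"
      proof (intro allI impI)
        fix i assume i: "i < length ps"
        show "cmod (cs'[j := \<zeta>] ! i) \<le> 1" by (cases "i = j") (use IH(1,2) z(1) i in auto)
      qed
      show "\<forall>i<Suc j. cmod (cs'[j := \<zeta>] ! i) = 1" using IH(1,3) z(1) j
        by (auto simp: nth_list_update less_Suc_eq)
      show "eigenvalue (diag_block_mat (sc (cs'[j := \<zeta>]) Ps) * M) \<mu>'" using z(2) unfolding F_def .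
    qed (rule z(3))
  qed
  from step[OF le_refl] show ?thesis by auto
qed



lemma struct_blocks: assumes "\<Delta> \<in> struct_set ps ks" "length ps = length ks"
  obtains Ds where "\<Delta> = diag_block_mat Ds" "blocks Ds ps ks"
  using assms unfolding struct_set_def blocks_def by auto

lemma piso_blocks: assumes "P \<in> piso_set ps ks" "length ps = length ks"
  obtains Ps where "P = diag_block_mat Ps" "blocks Ps ps ks" "\<forall>i<length ps. partial_isometry (Ps ! i)"
  using assms unfolding piso_set_def blocks_def by auto

lemma vec_minus_zero: fixes x y :: "complex vec" assumes x: "x \<in> carrier_vec n" and y: "y \<in> carrier_vec n" and e: "x - y = 0\<^sub>v n"
  shows "y = x"
proof (rule eq_vecI)
  fix i assume i: "i < dim_vec x"
  have "(x - y) $ i = 0\<^sub>v n $ i" using e by simp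
  thus "y $ i = x $ i" using i x y by simp
qed (use x y in auto)

lemma det_kernel: assumes D: "\<Delta> \<in> carrier_mat p k" and M: "M \<in> carrier_mat k p"
  and det: "det (1\<^sub>m p - \<Delta> * M) = (0::complex)"
  obtains x where "x \<in> carrier_vec p" "x \<noteq> 0\<^sub>v p" "\<Delta> *\<^sub>v (M *\<^sub>v x) = x"
proof -
  have m: "1\<^sub>m p - \<Delta> * M \<in> carrier_mat p p" using D M by auto
  from det det_0_iff_vec_prod_zero_field[OF m] obtain x where
    x: "x \<in> carrier_vec p" "x \<noteq> 0\<^sub>v p" "(1\<^sub>m p - \<Delta> * M) *\<^sub>v x = 0\<^sub>v p" by auto
  have "(1\<^sub>m p - \<Delta> * M) *\<^sub>v x = x - \<Delta> *\<^sub>v (M *\<^sub>v x)"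
    using D M x(1) by (simp add: minus_mult_distrib_mat_vec[of _ p p])
  with x(3) have eq: "x - \<Delta> *\<^sub>v (M *\<^sub>v x) = 0\<^sub>v p" by simp
  have "\<Delta> *\<^sub>v (M *\<^sub>v x) \<in> carrier_vec p" using D M x(1) by auto
  from vec_minus_zero[OF x(1) this eq] have "\<Delta> *\<^sub>v (M *\<^sub>v x) = x" .
  thus ?thesis using that x by blast
qed

lemma lowerD: assumes D: "\<Delta> \<in> carrier_mat p k" and M: "M \<in> carrier_mat k p"
  and det: "det (1\<^sub>m p - \<Delta> * M) = 0"
  shows "1 \<le> spec_norm \<Delta> * frob M"
proof -
  obtain x where x: "x \<in> carrier_vec p" "x \<noteq> 0\<^sub>v p" "\<Delta> *\<^sub>v (M *\<^sub>v x) = x"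
    using det_kernel[OF D M det] by blast
  have nx: "vnorm x > 0" using vnorm_eq_0[OF x(1)] x(2) vnorm_nonneg[of x] by simp
  have "vnorm x = vnorm (\<Delta> *\<^sub>v (M *\<^sub>v x))" using x(3) by simp
  also have "\<dots> \<le> spec_norm \<Delta> * vnorm (M *\<^sub>v x)" by (rule spec_norm_ge) (use D M x(1) in auto)
  also have "\<dots> \<le> spec_norm \<Delta> * (frob M * vnorm x)"
    by (intro mult_left_mono frob_bound[OF M x(1)] spec_norm_nonneg)
  finally have "1 * vnorm x \<le> (spec_norm \<Delta> * frob M) * vnorm x" by (simp add: ac_simps)
  thus ?thesis using nx by (simp only: mult_le_cancel_right_pos)
qed

lemma sum_list_pos: assumes "ps \<noteq> []" "\<forall>i<length ps. ps ! i > 0" shows "sum_list ps > (0::nat)"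
proof -
  from assms obtain q qs where "ps = q # qs" by (cases ps) auto
  with assms(2) have "q > 0" by auto
  thus ?thesis using \<open>ps = q # qs\<close> by simp
qed

lemma rho_nonneg: assumes "C \<in> carrier_mat n n" "n > 0" shows "spectral_radius C \<ge> 0"
  using spectral_radius_mem_max(1)[OF assms] by auto

lemma partI: assumes len: "length ps = length ks" and pos: "sum_list ps > 0"
  and M: "M \<in> carrier_mat (sum_list ks) (sum_list ps)"
  and P: "P \<in> piso_set ps ks" and r: "spectral_radius (P * M) > 0"
  shows "\<exists>\<Delta>. \<Delta> \<in> struct_set ps ks \<and> det (1\<^sub>m (sum_list ps) - \<Delta> * M) = 0 \<and>
      spec_norm \<Delta> \<le> 1 / spectral_radius (P * M)"
proof -
  obtain Ps where PP: "P = diag_block_mat Ps" "blocks Ps ps ks" "\<forall>i<length ps. partial_isometry (Ps ! i)"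
    using piso_blocks[OF P len] by blast
  have Pc: "P \<in> carrier_mat (sum_list ps) (sum_list ks)" unfolding PP(1) by (rule diag_carrier[OF PP(2)])
  have C: "P * M \<in> carrier_mat (sum_list ps) (sum_list ps)" using Pc M by auto
  define \<rho> where "\<rho> = spectral_radius (P * M)"
  obtain lam where lam: "eigenvalue (P * M) lam" "cmod lam = \<rho>"
    using spectral_radius_mem_max(1)[OF C pos] unfolding \<rho>_def spectrum_def by auto
  have lam0: "lam \<noteq> 0" using lam(2) r unfolding \<rho>_def by auto
  define \<Delta> where "\<Delta> = (1 / lam) \<cdot>\<^sub>m P"
  have contr: "vnorm (P *\<^sub>v x) \<le> vnorm x" if "x \<in> carrier_vec (sum_list ks)" for x
    unfolding PP(1)
    by (rule diag_contract[OF PP(2) _ that]) (use PP(2,3) pi_contract in \<open>auto simp: blocks_def\<close>)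
  have "\<Delta> = diag_block_mat (map (\<lambda>D. (1 / lam) \<cdot>\<^sub>m D) Ps)"
    unfolding \<Delta>_def PP(1) by (rule diag_smult[OF PP(2), symmetric])
  moreover have "blocks (map (\<lambda>D. (1 / lam) \<cdot>\<^sub>m D) Ps) ps ks" using PP(2) by (auto simp: blocks_def)
  ultimately have S: "\<Delta> \<in> struct_set ps ks" unfolding struct_set_def blocks_def by auto
  have "\<Delta> * M = (1 / lam) \<cdot>\<^sub>m (P * M)" unfolding \<Delta>_def by (rule mult_smult_assoc_mat[OF Pc M])
  hence det: "det (1\<^sub>m (sum_list ps) - \<Delta> * M) = 0"
    using eig_det[OF C, of "1 / lam"] lam0 lam(1) by simp
  have "spec_norm \<Delta> \<le> 1 / \<rho>"
  proof (rule spec_norm_le)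
    show "0 \<le> 1 / \<rho>" using r unfolding \<rho>_def by simp
    fix x :: "complex vec" assume x: "x \<in> carrier_vec (dim_col \<Delta>)"
    hence xk: "x \<in> carrier_vec (sum_list ks)" unfolding \<Delta>_def using Pc by simp
    have "vnorm (\<Delta> *\<^sub>v x) = cmod (1 / lam) * vnorm (P *\<^sub>v x)"
      unfolding \<Delta>_def smult_mat_mult_vec[OF Pc xk] vnorm_smult ..
    also have "\<dots> \<le> cmod (1 / lam) * vnorm x" by (intro mult_left_mono contr[OF xk]) simp
    also have "cmod (1 / lam) = 1 / \<rho>" using lam(2) by (simp add: norm_divide)
    finally show "vnorm (\<Delta> *\<^sub>v x) \<le> 1 / \<rho> * vnorm x" .
  qed
  thus ?thesis using S det unfolding \<rho>_def by blast
qed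

lemma partII: assumes len: "length ps = length ks" and pos: "sum_list ps > 0"
  and M: "M \<in> carrier_mat (sum_list ks) (sum_list ps)"
  and S: "\<Delta> \<in> struct_set ps ks" and det: "det (1\<^sub>m (sum_list ps) - \<Delta> * M) = 0"
  shows "\<exists>P \<in> piso_set ps ks. spectral_radius (P * M) \<ge> 1 / spec_norm \<Delta>"
proof -
  obtain Ds where DD: "\<Delta> = diag_block_mat Ds" "blocks Ds ps ks" using struct_blocks[OF S len] by blast
  have Dc: "\<Delta> \<in> carrier_mat (sum_list ps) (sum_list ks)" unfolding DD(1) by (rule diag_carrier[OF DD(2)])
  obtain x where x: "x \<in> carrier_vec (sum_list ps)" "x \<noteq> 0\<^sub>v (sum_list ps)" "\<Delta> *\<^sub>v (M *\<^sub>v x) = x"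
    using det_kernel[OF Dc M det] by blast
  define \<beta> where "\<beta> = spec_norm \<Delta>"
  have "1 \<le> \<beta> * frob M" unfolding \<beta>_def by (rule lowerD[OF Dc M det])
  hence \<beta>: "\<beta> > 0" using spec_norm_nonneg[of \<Delta>] unfolding \<beta>_def
    by (metis less_eq_real_def mult_zero_left not_one_le_zero)
  define y where "y = M *\<^sub>v x"
  have y: "y \<in> carrier_vec (sum_list ks)" unfolding y_def using M x(1) by auto
  have bnd: "vnorm (diag_block_mat Ds *\<^sub>v v) \<le> \<beta> * vnorm v" if "v \<in> carrier_vec (sum_list ks)" for v
    unfolding \<beta>_def DD(1)[symmetric] by (rule spec_norm_ge) (use that Dc in auto)
  obtain Ps cs where PP: "blocks Ps ps ks" "\<forall>i<length ps. partial_isometry (Ps ! i)" "length cs = length ps"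
    "\<forall>i<length ps. cmod (cs ! i) \<le> 1"
    "diag_block_mat (sc cs Ps) *\<^sub>v y = complex_of_real (1 / \<beta>) \<cdot>\<^sub>v (diag_block_mat Ds *\<^sub>v y)"
    using construct[OF DD(2) \<beta> bnd y] by blast
  have Qc: "diag_block_mat (sc cs Ps) \<in> carrier_mat (sum_list ps) (sum_list ks)"
    by (rule diag_carrier[OF blocks_sc[OF PP(1,3)]])
  have "(diag_block_mat (sc cs Ps) * M) *\<^sub>v x = complex_of_real (1 / \<beta>) \<cdot>\<^sub>v x"
    using PP(5) x(3) Qc M x(1) unfolding y_def DD(1) by simp
  hence eig: "eigenvalue (diag_block_mat (sc cs Ps) * M) (complex_of_real (1 / \<beta>))"
    unfolding eigenvalue_def eigenvector_def using x(1,2) Qc by auto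
  obtain cs' \<mu> where U: "length cs' = length ps" "\<forall>i<length ps. cmod (cs' ! i) = 1"
    "eigenvalue (diag_block_mat (sc cs' Ps) * M) \<mu>" "1 / \<beta> \<le> cmod \<mu>"
  proof -
    have c: "1 / \<beta> \<le> cmod (complex_of_real (1 / \<beta>))" unfolding norm_of_real using \<beta> by simp
    have p: "0 < 1 / \<beta>" using \<beta> by simp
    show ?thesis using unimod[OF PP(1) M PP(3,4) eig p c] that by blast
  qed
  define P where "P = diag_block_mat (sc cs' Ps)"
  have Pblk: "blocks (sc cs' Ps) ps ks" by (rule blocks_sc[OF PP(1) U(1)])
  have Pc: "P \<in> carrier_mat (sum_list ps) (sum_list ks)" unfolding P_def by (rule diag_carrier[OF Pblk])
  have "P \<in> piso_set ps ks"
    unfolding piso_set_def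
  proof (intro CollectI exI[of _ "sc cs' Ps"] conjI allI impI)
    show "P = diag_block_mat (sc cs' Ps)" by (rule P_def)
    show "length (sc cs' Ps) = length ps" using Pblk unfolding blocks_def by simp
    fix i assume i: "i < length ps"
    show "sc cs' Ps ! i \<in> carrier_mat (ps ! i) (ks ! i)" using Pblk i unfolding blocks_def by simp
    have "sc cs' Ps ! i = (cs' ! i) \<cdot>\<^sub>m (Ps ! i)" using i U(1) PP(1) unfolding sc_def blocks_def by simp
    thus "partial_isometry (sc cs' Ps ! i)" using pi_smult PP(2) U(2) i by simp
  qed
  moreover have "spectral_radius (P * M) \<ge> cmod \<mu>"
  proof (rule spectral_radius_mem_max(2))
    show "P * M \<in> carrier_mat (sum_list ps) (sum_list ps)" using Pc M by auto
    show "cmod \<mu> \<in> norm ` spectrum (P * M)" using U(3) unfolding P_def spectrum_def by auto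
  qed (rule pos)
  ultimately show ?thesis using U(4) unfolding \<beta>_def by force
qed



theorem theorem3p1:
  fixes ps ks :: "nat list" and M :: "complex mat"
  assumes "length ps = length ks"
    and "ps \<noteq> []"
    and "\<forall>i<length ps. ps ! i > 0"
    and "\<forall>i<length ks. ks ! i > 0"
    and "M \<in> carrier_mat (sum_list ks) (sum_list ps)"
  shows "mu_S ps ks M = Sup ((\<lambda>P. spectral_radius (P * M)) ` piso_set ps ks)"
proof -
  note len = assms(1) and M = assms(5)
  have pos: "sum_list ps > 0" by (rule sum_list_pos[OF assms(2,3)])
  define D where "D = {\<Delta> \<in> struct_set ps ks. det (1\<^sub>m (sum_list ps) - \<Delta> * M) = 0}"
  define R where "R = (\<lambda>P. spectral_radius (P * M)) ` piso_set ps ks"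
  have mu: "mu_S ps ks M = (if D = {} then 0 else inverse (Inf (spec_norm ` D)))"
    unfolding mu_S_def D_def Let_def ..
  have Pcar: "P \<in> carrier_mat (sum_list ps) (sum_list ks)" if PP: "P \<in> piso_set ps ks" for P
  proof -
    obtain Ps where "P = diag_block_mat Ps" "blocks Ps ps ks" using piso_blocks[OF PP len] by blast
    thus ?thesis using diag_carrier by blast
  qed
  have Rnn: "r \<ge> 0" if "r \<in> R" for r
  proof -
    from that obtain P where P: "P \<in> piso_set ps ks" "r = spectral_radius (P * M)" unfolding R_def by blast
    have "P * M \<in> carrier_mat (sum_list ps) (sum_list ps)" using Pcar[OF P(1)] M by auto
    from rho_nonneg[OF this pos] P(2) show ?thesis by simp
  qed
  have Rne: "R \<noteq> {}"
  proof -
    define Z where "Z = map (\<lambda>(p,k). 0\<^sub>m p k :: complex mat) (zip ps ks)"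
    have "diag_block_mat Z \<in> piso_set ps ks"
      unfolding piso_set_def Z_def using len pi_zero by auto
    thus ?thesis unfolding R_def by blast
  qed
  have DI: "\<exists>\<Delta>\<in>D. spec_norm \<Delta> \<le> 1 / r" if "r \<in> R" "r > 0" for r
  proof -
    from that obtain P where P: "P \<in> piso_set ps ks" "r = spectral_radius (P * M)" unfolding R_def by blast
    from partI[OF len pos M P(1)] that(2) P(2) show ?thesis unfolding D_def by auto
  qed
  have DII: "\<exists>r\<in>R. r \<ge> 1 / spec_norm \<Delta>" if "\<Delta> \<in> D" for \<Delta>
  proof -
    from that have "\<Delta> \<in> struct_set ps ks" "det (1\<^sub>m (sum_list ps) - \<Delta> * M) = 0" unfolding D_def by auto
    from partII[OF len pos M this] show ?thesis unfolding R_def by auto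
  qed
  have Dlow: "1 \<le> spec_norm \<Delta> * frob M" if "\<Delta> \<in> D" for \<Delta>
  proof -
    from that have S: "\<Delta> \<in> struct_set ps ks" and det: "det (1\<^sub>m (sum_list ps) - \<Delta> * M) = 0" unfolding D_def by auto
    obtain Ds where "\<Delta> = diag_block_mat Ds" "blocks Ds ps ks" using struct_blocks[OF S len] by blast
    hence "\<Delta> \<in> carrier_mat (sum_list ps) (sum_list ks)" using diag_carrier by blast
    from lowerD[OF this M det] show ?thesis .
  qed
  show ?thesis
  proof (cases "D = {}")
    case True
    have "R \<subseteq> {0}"
    proof
      fix r assume r: "r \<in> R"
      have "\<not> r > 0" using DI[OF r] True by auto
      thus "r \<in> {0}" using Rnn[OF r] by simp
    qed
    hence "R = {0}" using Rne by blast
    thus ?thesis unfolding mu R_def[symmetric] using True by simp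
  next
    case False
    then obtain \<Delta>0 where \<Delta>0: "\<Delta>0 \<in> D" by blast
    have fpos: "frob M > 0"
    proof (rule ccontr)
      assume "\<not> frob M > 0" hence "frob M = 0" using frob_nonneg[of M] by simp
      thus False using Dlow[OF \<Delta>0] by simp
    qed
    define I where "I = Inf (spec_norm ` D)"
    have bddb: "bdd_below (spec_norm ` D)" by (rule bdd_belowI[of _ 0]) (auto simp: spec_norm_nonneg)
    have I_ge: "1 / frob M \<le> I" unfolding I_def
    proof (rule cInf_greatest)
      show "spec_norm ` D \<noteq> {}" using False by simp
      fix x assume "x \<in> spec_norm ` D"
      then obtain \<Delta> where "\<Delta> \<in> D" "x = spec_norm \<Delta>" by blast
      thus "1 / frob M \<le> x" using Dlow[of \<Delta>] fpos by (simp add: divide_le_eq mult.commute)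
    qed
    have "1 / frob M > 0" using fpos by simp
    hence Ipos: "I > 0" using I_ge by linarith
    have Rle: "r \<le> 1 / I" if "r \<in> R" for r
    proof (cases "r > 0")
      case True
      from DI[OF that True] obtain \<Delta> where \<Delta>: "\<Delta> \<in> D" "spec_norm \<Delta> \<le> 1 / r" by blast
      have "I \<le> spec_norm \<Delta>" unfolding I_def by (rule cInf_lower[OF _ bddb]) (use \<Delta> in auto)
      hence "I \<le> 1 / r" using \<Delta>(2) by simp
      thus ?thesis using True Ipos by (simp add: le_divide_eq mult.commute)
    next
      case False
      have "1 / I > 0" using Ipos by simp
      thus ?thesis using False by linarith
    qed
    have bdda: "bdd_above R" by (rule bdd_aboveI[of _ "1 / I"]) (rule Rle)
    have up: "Sup R \<le> 1 / I" by (rule cSup_least[OF Rne Rle])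
    have lo: "1 / I \<le> Sup R"
    proof -
      have "1 / Sup R \<le> I" unfolding I_def
      proof (rule cInf_greatest)
        show "spec_norm ` D \<noteq> {}" using False by simp
        fix x assume "x \<in> spec_norm ` D"
        then obtain \<Delta> where \<Delta>: "\<Delta> \<in> D" "x = spec_norm \<Delta>" by blast
        from DII[OF \<Delta>(1)] obtain r where r: "r \<in> R" "r \<ge> 1 / spec_norm \<Delta>" by blast
        have sp: "spec_norm \<Delta> > 0"
        proof (rule ccontr)
          assume "\<not> spec_norm \<Delta> > 0" hence "spec_norm \<Delta> = 0" using spec_norm_nonneg[of \<Delta>] by simp
          thus False using Dlow[OF \<Delta>(1)] by simp
        qed
        have "r \<le> Sup R" by (rule cSup_upper[OF r(1) bdda])
        hence h: "1 / spec_norm \<Delta> \<le> Sup R" using r(2) by simp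
        have "1 / spec_norm \<Delta> > 0" using sp by simp
        hence sR: "Sup R > 0" using h by linarith
        from h sp have "1 \<le> Sup R * spec_norm \<Delta>" by (simp add: divide_le_eq)
        thus "1 / Sup R \<le> x" using sR \<Delta>(2) by (simp add: divide_le_eq mult.commute)
      qed
      moreover have "Sup R > 0"
      proof -
        from DII[OF \<Delta>0] obtain r where r: "r \<in> R" "r \<ge> 1 / spec_norm \<Delta>0" by blast
        have sp: "spec_norm \<Delta>0 > 0"
        proof (rule ccontr)
          assume "\<not> spec_norm \<Delta>0 > 0" hence "spec_norm \<Delta>0 = 0" using spec_norm_nonneg[of \<Delta>0] by simp
          thus False using Dlow[OF \<Delta>0] by simp
        qed
        have "r \<le> Sup R" by (rule cSup_upper[OF r(1) bdda])
        moreover have "1 / spec_norm \<Delta>0 > 0" using sp by simp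
        ultimately show ?thesis using r(2) by linarith
      qed
      ultimately have "1 \<le> I * Sup R" by (simp add: divide_le_eq)
      thus ?thesis using Ipos by (simp add: divide_le_eq mult.commute)
    qed
    have "mu_S ps ks M = 1 / I" unfolding mu I_def using False by (simp add: inverse_eq_divide)
    thus ?thesis using up lo unfolding R_def[symmetric] by simp
  qed
qed


end
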